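(* Every pseudoforest $G$ with $\operatorname{cycles}(G)=\kappa(G)$ can be transformed into a unicyclic graph by a sequence of p-switches; that is, there are 2-switches $\tau_1,\dots,\tau_k$ ($k\ge0$) such that, with $G_0=G$ and $G_i=\tau_i(G_{i-1})$, each $\tau_i$ is a p-switch over $G_{i-1}$ and $G_k$ is unicyclic.
   Context: Graphs are finite, simple, undirected, labeled. A unicyclic graph is a connected graph with exactly one cycle; a pseudoforest is a graph each of whose components is a tree or a unicyclic graph. $\kappa(G)$ is the number of connected components and $\operatorname{cycles}(G)$ the number of subgraphs of $G$ isomorphic to a cycle. For vertices $a,b,c,d$, $A=\binom{a\ b}{c\ d}$ is interchangeable in $G$ if $ab,cd\in E(G)$, $\{a,b\}\cap\{c,d\}=\varnothing$, $ac,bd\notin E(G)$; the 2-switch $\tau_A$ sends $G$ to $G-ab-cd+ac+bd$ if $A$ is interchangeable and to $G$ otherwise (trivial). A nontrivial 2-switch $\tau$ over a pseudoforest $G$ is a p-switch if $\tau(G)$ is a pseudoforest. *)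

theory Defs
  imports Main
begin

definition graph :: "'a set \<Rightarrow> 'a set set \<Rightarrow> bool" where
  "graph V E \<longleftrightarrow> finite V \<and> (\<forall>e\<in>E. \<exists>a b. a \<noteq> b \<and> a \<in> V \<and> b \<in> V \<and> e = {a, b})"

definition adj :: "'a set set \<Rightarrow> 'a \<Rightarrow> 'a \<Rightarrow> bool" where
  "adj E x y \<longleftrightarrow> {x, y} \<in> E \<and> x \<noteq> y"

definition reach :: "'a set \<Rightarrow> 'a set set \<Rightarrow> 'a \<Rightarrow> 'a \<Rightarrow> bool" where
  "reach V E x y \<longleftrightarrow> x \<in> V \<and> y \<in> V \<and> (adj E)\<^sup>*\<^sup>* x y"

definition connected_graph :: "'a set \<Rightarrow> 'a set set \<Rightarrow> bool" where
  "connected_graph V E \<longleftrightarrow> V \<noteq> {} \<and> (\<forall>x\<in>V. \<forall>y\<in>V. reach V E x y)"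

definition components :: "'a set \<Rightarrow> 'a set set \<Rightarrow> 'a set set" where
  "components V E = (\<lambda>x. {y. reach V E x y}) ` V"

definition kappa :: "'a set \<Rightarrow> 'a set set \<Rightarrow> nat" where
  "kappa V E = card (components V E)"

text \<open>A subgraph isomorphic to a cycle is determined by its (nonempty) edge set C: the graph
spanned by C is connected and every vertex in it has degree exactly 2 within C (for a finite
simple graph this is exactly a cycle C_n, n >= 3).\<close>
definition is_cycle_subgraph :: "'a set set \<Rightarrow> 'a set set \<Rightarrow> bool" where
  "is_cycle_subgraph E C \<longleftrightarrow> C \<subseteq> E \<and> C \<noteq> {} \<and>
     (\<forall>v\<in>\<Union>C. card {e\<in>C. v \<in> e} = 2) \<and> connected_graph (\<Union>C) C"

definition cycles :: "'a set set \<Rightarrow> nat" where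
  "cycles E = card {C. is_cycle_subgraph E C}"

definition induced_edges :: "'a set set \<Rightarrow> 'a set \<Rightarrow> 'a set set" where
  "induced_edges E W = {e\<in>E. e \<subseteq> W}"

definition unicyclic :: "'a set \<Rightarrow> 'a set set \<Rightarrow> bool" where
  "unicyclic V E \<longleftrightarrow> graph V E \<and> connected_graph V E \<and> cycles E = 1"

definition tree :: "'a set \<Rightarrow> 'a set set \<Rightarrow> bool" where
  "tree V E \<longleftrightarrow> graph V E \<and> connected_graph V E \<and> cycles E = 0"

definition pseudoforest :: "'a set \<Rightarrow> 'a set set \<Rightarrow> bool" where
  "pseudoforest V E \<longleftrightarrow> graph V E \<and>
     (\<forall>W\<in>components V E. tree W (induced_edges E W) \<or> unicyclic W (induced_edges E W))"

definition interchangeable :: "'a set set \<Rightarrow> 'a \<Rightarrow> 'a \<Rightarrow> 'a \<Rightarrow> 'a \<Rightarrow> bool" where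
  "interchangeable E a b c d \<longleftrightarrow> {a, b} \<in> E \<and> {c, d} \<in> E \<and> {a, b} \<inter> {c, d} = {} \<and>
     {a, c} \<notin> E \<and> {b, d} \<notin> E"

definition two_switch :: "'a \<Rightarrow> 'a \<Rightarrow> 'a \<Rightarrow> 'a \<Rightarrow> 'a set set \<Rightarrow> 'a set set" where
  "two_switch a b c d E =
     (if interchangeable E a b c d then (E - {{a, b}, {c, d}}) \<union> {{a, c}, {b, d}} else E)"

definition p_switch :: "'a set \<Rightarrow> 'a set set \<Rightarrow> 'a \<Rightarrow> 'a \<Rightarrow> 'a \<Rightarrow> 'a \<Rightarrow> bool" where
  "p_switch V E a b c d \<longleftrightarrow> pseudoforest V E \<and> interchangeable E a b c d \<and>
     pseudoforest V (two_switch a b c d E)"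

end

theory Submission
  imports Defs
begin


lemma adj_sym: "adj E x y \<Longrightarrow> adj E y x"
  unfolding adj_def by (auto simp: insert_commute)

lemma rtr_sym: "(adj E)\<^sup>*\<^sup>* x y \<Longrightarrow> (adj E)\<^sup>*\<^sup>* y x"
proof (induction rule: rtranclp_induct)
  case base then show ?case by simp
next
  case (step y z) then show ?case
    by (meson adj_sym converse_rtranclp_into_rtranclp)
qed

lemma rtr_mono: "(adj C)\<^sup>*\<^sup>* x y \<Longrightarrow> C \<subseteq> E \<Longrightarrow> (adj E)\<^sup>*\<^sup>* x y"
proof (induction rule: rtranclp_induct)
  case base then show ?case by simp
next
  case (step y z) then show ?case
    by (metis adj_def rtranclp.rtrancl_into_rtrancl subsetD)
qed

lemma graph_adj: "graph V E \<Longrightarrow> adj E x y \<Longrightarrow> x \<in> V \<and> y \<in> V"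
  unfolding graph_def adj_def by (metis doubleton_eq_iff)

lemma graph_rtr: assumes "graph V E" shows "(adj E)\<^sup>*\<^sup>* x y \<Longrightarrow> x \<in> V \<Longrightarrow> y \<in> V"
  by (induction rule: rtranclp_induct) (auto dest: graph_adj[OF assms])

lemma graph_finite: "graph V E \<Longrightarrow> finite E"
proof -
  assume g: "graph V E"
  then have "E \<subseteq> Pow V" unfolding graph_def by auto
  moreover have "finite V" using g graph_def by auto
  ultimately show ?thesis by (meson finite_Pow_iff rev_finite_subset)
qed

lemma graph_edge: "graph V E \<Longrightarrow> e \<in> E \<Longrightarrow> \<exists>x y. x \<noteq> y \<and> x \<in> V \<and> y \<in> V \<and> e = {x, y}"
  unfolding graph_def by auto

lemma comp_iff: "W \<in> components V E \<longleftrightarrow> (\<exists>x\<in>V. W = {y. reach V E x y})"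
  unfolding components_def by (rule image_iff)

definition cls where "cls V E x = {y. reach V E x y}"

lemma cls_mem: assumes "graph V E" "x \<in> V" shows "y \<in> cls V E x \<longleftrightarrow> (adj E)\<^sup>*\<^sup>* x y"
proof
  assume "y \<in> cls V E x" then show "(adj E)\<^sup>*\<^sup>* x y" unfolding cls_def reach_def by simp
next
  assume r: "(adj E)\<^sup>*\<^sup>* x y"
  have "y \<in> V" using graph_rtr[OF assms(1) r assms(2)] .
  then show "y \<in> cls V E x" unfolding cls_def reach_def using r assms(2) by simp
qed

lemma cls_eq: assumes g: "graph V E" and x: "x \<in> V" and y: "y \<in> cls V E x" shows "cls V E y = cls V E x"
proof -
  have r: "(adj E)\<^sup>*\<^sup>* x y" using cls_mem[OF g x] y by simp
  have yV: "y \<in> V" using graph_rtr[OF g r x] .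
  show ?thesis
  proof (intro set_eqI)
    fix z
    have "(adj E)\<^sup>*\<^sup>* y z \<longleftrightarrow> (adj E)\<^sup>*\<^sup>* x z"
      using r rtr_sym rtranclp_trans by metis
    then show "z \<in> cls V E y \<longleftrightarrow> z \<in> cls V E x" using cls_mem[OF g x] cls_mem[OF g yV] by simp
  qed
qed

lemma comp_cls: "graph V E \<Longrightarrow> W \<in> components V E \<Longrightarrow> x \<in> W \<Longrightarrow> W = cls V E x \<and> x \<in> V"
  unfolding comp_iff by (metis cls_def cls_eq mem_Collect_eq reach_def)

lemma comp_closed: "graph V E \<Longrightarrow> W \<in> components V E \<Longrightarrow> x \<in> W \<Longrightarrow> (adj E)\<^sup>*\<^sup>* x y \<Longrightarrow> y \<in> W"
  by (metis cls_mem comp_cls)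

lemma comp_edge: "graph V E \<Longrightarrow> W \<in> components V E \<Longrightarrow> x \<in> W \<Longrightarrow> f \<in> E \<Longrightarrow> x \<in> f \<Longrightarrow> f \<subseteq> W"
proof -
  assume g: "graph V E" and W: "W \<in> components V E" "x \<in> W" "f \<in> E" "x \<in> f"
  obtain u v where uv: "u \<noteq> v" "f = {u, v}" using g W graph_edge by metis
  have "adj E u v" using uv W unfolding adj_def by auto
  then show ?thesis using W uv comp_closed[OF g W(1)]
    by (metis adj_sym empty_iff insertE insert_subset r_into_rtranclp subsetI)
qed

lemma comp_sub: "graph V E \<Longrightarrow> W \<in> components V E \<Longrightarrow> W \<subseteq> V \<and> W \<noteq> {}"
  unfolding comp_iff reach_def by auto

lemma comp_disj: "graph V E \<Longrightarrow> W1 \<in> components V E \<Longrightarrow> W2 \<in> components V E \<Longrightarrow> W1 \<noteq> W2 \<Longrightarrow> W1 \<inter> W2 = {}"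
  by (metis comp_cls disjoint_iff)

lemma comp_finite: "graph V E \<Longrightarrow> finite (components V E)"
  unfolding components_def graph_def by auto

lemma comp_induced_graph: "graph V E \<Longrightarrow> W \<in> components V E \<Longrightarrow> graph W (induced_edges E W)"
proof -
  assume g: "graph V E" and W: "W \<in> components V E"
  have "finite W" using comp_sub[OF g W] g unfolding graph_def using finite_subset by blast
  moreover have "\<forall>e\<in>induced_edges E W. \<exists>a b. a \<noteq> b \<and> a \<in> W \<and> b \<in> W \<and> e = {a, b}"
  proof
    fix e assume e: "e \<in> induced_edges E W"
    then obtain a b where "a \<noteq> b" "e = {a,b}" using graph_edge[OF g] unfolding induced_edges_def by blast
    then show "\<exists>a b. a \<noteq> b \<and> a \<in> W \<and> b \<in> W \<and> e = {a, b}" using e unfolding induced_edges_def by blast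
  qed
  ultimately show ?thesis unfolding graph_def by blast
qed

lemma comp_induced_conn: "graph V E \<Longrightarrow> W \<in> components V E \<Longrightarrow> connected_graph W (induced_edges E W)"
proof -
  assume g: "graph V E" and W: "W \<in> components V E"
  have *: "(adj E)\<^sup>*\<^sup>* x y \<Longrightarrow> x \<in> W \<Longrightarrow> (adj (induced_edges E W))\<^sup>*\<^sup>* x y \<and> y \<in> W" for x y
  proof (induction rule: rtranclp_induct)
    case base then show ?case by simp
  next
    case (step y z)
    then have "{y, z} \<subseteq> W" using comp_edge[OF g W] unfolding adj_def by auto
    then have "adj (induced_edges E W) y z" using step unfolding adj_def induced_edges_def by auto
    then show ?case using step by (meson \<open>{y, z} \<subseteq> W\<close> insert_subset rtranclp.rtrancl_into_rtrancl)
  qed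
  show ?thesis unfolding connected_graph_def reach_def
    using comp_sub[OF g W] * comp_cls[OF g W] cls_mem[OF g] by metis
qed



definition twosets :: "'a set set \<Rightarrow> bool" where
  "twosets C \<longleftrightarrow> (\<forall>e\<in>C. \<exists>x y. x \<noteq> y \<and> e = {x, y})"

lemma cyc_conn: "is_cycle_subgraph F C \<Longrightarrow> x \<in> \<Union>C \<Longrightarrow> y \<in> \<Union>C \<Longrightarrow> (adj C)\<^sup>*\<^sup>* x y"
  unfolding is_cycle_subgraph_def connected_graph_def reach_def by blast
lemma cyc_subF: "is_cycle_subgraph F C \<Longrightarrow> C \<subseteq> F"
  unfolding is_cycle_subgraph_def by simp
lemma cyc_ne: "is_cycle_subgraph F C \<Longrightarrow> C \<noteq> {}"
  unfolding is_cycle_subgraph_def by simp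
lemma deg2: "is_cycle_subgraph F C \<Longrightarrow> v \<in> \<Union>C \<Longrightarrow> card {e\<in>C. v\<in>e} = 2"
  unfolding is_cycle_subgraph_def by blast

lemma cyc_sub_eq:
  assumes c: "is_cycle_subgraph E C" and c': "is_cycle_subgraph E' C'" and sub: "C' \<subseteq> C"
    and fin: "finite C" and tw: "twosets C"
  shows "C' = C"
proof (rule ccontr)
  assume ne: "C' \<noteq> C"
  define S where "S = \<Union>C'"
  have step: "(adj C)\<^sup>*\<^sup>* v z \<Longrightarrow> v \<in> S \<Longrightarrow> z \<in> S \<or> (\<exists>f\<in>C-C'. f\<inter>S\<noteq>{})" for v z
  proof (induction rule: rtranclp_induct)
    case base then show ?case by simp
  next
    case (step y z)
    have yz: "{y,z} \<in> C" using step(2) unfolding adj_def by simp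
    show ?case
    proof (cases "y \<in> S")
      case True
      show ?thesis
      proof (cases "{y,z} \<in> C'")
        case True 
        then have "z \<in> S" unfolding S_def by blast
        then show ?thesis by simp
      next
        case False 
        then have "{y,z} \<in> C - C'" using yz by simp
        moreover have "y \<in> {y,z} \<inter> S" using \<open>y \<in> S\<close> by simp
        ultimately show ?thesis by (intro disjI2 bexI[of _ "{y,z}"]) auto
      qed
    next
      case False then show ?thesis using step(3,4) by simp
    qed
  qed
  obtain e where e: "e \<in> C" "e \<notin> C'" using ne sub by blast
  obtain x y where xy: "x \<noteq> y" "e = {x,y}" using tw e unfolding twosets_def by blast
  obtain e' where e': "e' \<in> C'" using cyc_ne[OF c'] by blast
  have "e' \<in> C" using e' sub by blast
  then obtain v where v: "v \<in> e'" using tw unfolding twosets_def by blast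
  have vS: "v \<in> S" using v e' S_def by blast
  have "v \<in> \<Union>C" using v \<open>e' \<in> C\<close> by blast
  moreover have "x \<in> \<Union>C" using e xy by blast
  ultimately have "(adj C)\<^sup>*\<^sup>* v x" using cyc_conn[OF c] by blast
  then have "x \<in> S \<or> (\<exists>f\<in>C-C'. f\<inter>S\<noteq>{})" using step vS by blast
  moreover have "x \<in> S \<Longrightarrow> e \<in> C - C' \<and> e \<inter> S \<noteq> {}" using e xy by blast
  ultimately obtain f where f: "f \<in> C" "f \<notin> C'" "f \<inter> S \<noteq> {}" by blast
  then obtain u where u: "u \<in> f" "u \<in> S" by blast
  have d1: "card {g\<in>C'. u\<in>g} = 2" using deg2[OF c'] u unfolding S_def by blast
  have d2: "card {g\<in>C. u\<in>g} = 2" using deg2[OF c] u f by blast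
  have sub2: "{g\<in>C'. u\<in>g} \<subseteq> {g\<in>C. u\<in>g}" using sub by blast
  have fin2: "finite {g\<in>C. u\<in>g}" using fin by simp
  have "f \<in> {g\<in>C. u\<in>g}" "f \<notin> {g\<in>C'. u\<in>g}" using f u by simp_all
  then have "{g\<in>C'. u\<in>g} \<noteq> {g\<in>C. u\<in>g}" by metis
  then have "{g\<in>C'. u\<in>g} \<subset> {g\<in>C. u\<in>g}" using sub2 by (simp add: psubset_eq)
  then have "card {g\<in>C'. u\<in>g} < card {g\<in>C. u\<in>g}"
    using psubset_card_mono[OF fin2] by blast
  then show False using d1 d2 by simp
qed

lemma cyc_exists:
  assumes fin: "finite D" and ne: "D \<noteq> {}" and tw: "twosets D"
    and reg: "\<forall>v\<in>\<Union>D. card {e\<in>D. v\<in>e} = 2"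
  shows "\<exists>C. C \<subseteq> D \<and> is_cycle_subgraph D C"
proof -
  obtain e where e: "e \<in> D" using ne by blast
  obtain v w where vw: "v \<noteq> w" "e = {v,w}" using tw e unfolding twosets_def by blast
  define K where "K = {y. (adj D)\<^sup>*\<^sup>* v y}"
  define C where "C = {f\<in>D. f \<subseteq> K}"
  have closed: "f \<in> D \<Longrightarrow> u \<in> f \<Longrightarrow> u \<in> K \<Longrightarrow> f \<subseteq> K" for f u
  proof -
    assume f: "f \<in> D" "u \<in> f" "u \<in> K"
    obtain p q where pq: "p \<noteq> q" "f = {p,q}" using tw f unfolding twosets_def by blast
    have "adj D p q" "adj D q p" using pq f unfolding adj_def by (auto simp: insert_commute)
    then show ?thesis using f pq unfolding K_def
      by (auto intro: rtranclp.rtrancl_into_rtrancl)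
  qed
  have degeq: "u \<in> K \<Longrightarrow> {f\<in>C. u\<in>f} = {f\<in>D. u\<in>f}" for u
    using closed unfolding C_def by blast
  have vK: "v \<in> K" unfolding K_def by simp
  have eC: "e \<in> C" using closed[OF e] vw vK e unfolding C_def by auto
  have UK: "\<Union>C \<subseteq> K" unfolding C_def by blast
  have conn: "(adj D)\<^sup>*\<^sup>* v y \<Longrightarrow> (adj C)\<^sup>*\<^sup>* v y" for y
  proof (induction rule: rtranclp_induct)
    case base then show ?case by simp
  next
    case (step y z)
    then have "y \<in> K" unfolding K_def by simp
    moreover have "{y,z} \<in> D" using step unfolding adj_def by simp
    ultimately have "{y,z} \<in> C" using closed unfolding C_def by blast
    then have "adj C y z" using step unfolding adj_def by simp
    then show ?case using step by (meson rtranclp.rtrancl_into_rtrancl)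
  qed
  have "is_cycle_subgraph D C"
    unfolding is_cycle_subgraph_def
  proof (intro conjI)
    show "C \<subseteq> D" unfolding C_def by blast
    show "C \<noteq> {}" using eC by blast
    show "\<forall>v\<in>\<Union>C. card {e \<in> C. v \<in> e} = 2"
      using degeq UK reg unfolding C_def by auto
    show "connected_graph (\<Union>C) C"
      unfolding connected_graph_def reach_def
    proof (intro conjI ballI)
      show "\<Union>C \<noteq> {}" using eC vw by blast
      fix x y assume x: "x \<in> \<Union>C" and y: "y \<in> \<Union>C"
      have "(adj C)\<^sup>*\<^sup>* v x" "(adj C)\<^sup>*\<^sup>* v y" using x y UK conn unfolding K_def by blast+
      then show "(adj C)\<^sup>*\<^sup>* x y"
        by (meson rtr_sym rtranclp_trans)
      show "x \<in> \<Union>C" using x .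
      show "y \<in> \<Union>C" using y .
    qed
  qed
  then show ?thesis unfolding is_cycle_subgraph_def by blast
qed

lemma cyc_in_comp:
  assumes g: "graph V E" and c: "is_cycle_subgraph E C"
  shows "\<exists>W\<in>components V E. C \<subseteq> induced_edges E W"
proof -
  obtain e where e: "e \<in> C" using cyc_ne[OF c] by blast
  have CE: "C \<subseteq> E" using cyc_subF[OF c] .
  have eE: "e \<in> E" using CE e by blast
  obtain v w where vw: "v \<noteq> w" "v \<in> V" "e = {v,w}" using graph_edge[OF g eE] by blast
  define W where "W = cls V E v"
  have W: "W \<in> components V E" unfolding W_def cls_def components_def using vw(2) by (rule imageI)
  have vC: "v \<in> \<Union>C" using e vw(3) by blast
  have "f \<subseteq> W" if f: "f \<in> C" for f
  proof -
    have fE: "f \<in> E" using f CE by blast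
    obtain p q where pq: "p \<noteq> q" "f = {p,q}" using graph_edge[OF g fE] by blast
    have pC: "p \<in> \<Union>C" using f pq(2) by blast
    have "(adj C)\<^sup>*\<^sup>* v p" using cyc_conn[OF c vC pC] .
    then have "(adj E)\<^sup>*\<^sup>* v p" using rtr_mono CE by metis
    then have "p \<in> W" unfolding W_def using cls_mem[OF g vw(2)] by simp
    moreover have "p \<in> f" using pq by simp
    ultimately show ?thesis using comp_edge[OF g W _ fE] by simp
  qed
  then have "C \<subseteq> induced_edges E W" using CE unfolding induced_edges_def by blast
  then show ?thesis using W by blast
qed

lemma parity:
  assumes fin: "finite C" and tw: "twosets C" and reg: "\<forall>v\<in>\<Union>C. card {e\<in>C. v\<in>e} = 2"
  shows "even (card {e\<in>C. card (e \<inter> S) = 1})"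
proof -
  define T where "T = S \<inter> \<Union>C"
  have finU: "finite (\<Union>C)" using fin tw unfolding twosets_def by auto
  then have finT: "finite T" unfolding T_def by simp
  have "(\<Sum>v\<in>T. card {e\<in>C. v\<in>e}) = (\<Sum>e\<in>C. card {v\<in>T. v\<in>e})"
    using sum.swap_restrict[OF finT fin, of "\<lambda>_ _. (1::nat)" "\<lambda>v e. v \<in> e"] by simp
  moreover have "(\<Sum>v\<in>T. card {e\<in>C. v\<in>e}) = (\<Sum>v\<in>T. 2)"
    using reg unfolding T_def by (intro sum.cong) auto
  moreover have "{v\<in>T. v\<in>e} = e \<inter> S" if "e \<in> C" for e using that unfolding T_def by blast
  ultimately have s: "(\<Sum>e\<in>C. card (e \<inter> S)) = 2 * card T" by simp
  define C1 where "C1 = {e\<in>C. card (e \<inter> S) = 1}"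
  have c1: "C1 \<subseteq> C" unfolding C1_def by blast
  have sp: "(\<Sum>e\<in>C. card (e \<inter> S)) = (\<Sum>e\<in>C1. card (e \<inter> S)) + (\<Sum>e\<in>C-C1. card (e \<inter> S))"
    by (metis add.commute c1 fin sum.subset_diff)
  have s1: "(\<Sum>e\<in>C1. card (e \<inter> S)) = card C1" unfolding C1_def by simp
  have ev: "even (\<Sum>e\<in>C-C1. card (e \<inter> S))"
  proof (rule even_sum_iff[THEN iffD2])
    show "finite (C - C1)" using fin by simp
    have "{a \<in> C - C1. odd (card (a \<inter> S))} = {}"
    proof -
      have "even (card (a \<inter> S))" if a: "a \<in> C - C1" for a
      proof -
        obtain x y where xy: "x \<noteq> y" "a = {x,y}" using a tw unfolding twosets_def by blast
        have "card (a \<inter> S) \<noteq> 1" using a unfolding C1_def by blast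
        moreover have "card (a \<inter> S) \<in> {0,1,2}" using xy
          by (cases "x \<in> S"; cases "y \<in> S") auto
        ultimately show ?thesis by auto
      qed
      then show ?thesis by blast
    qed
    then show "even (card {a \<in> C - C1. odd (card (a \<inter> S))})" by (simp only: card.empty even_zero)
  qed
  have "card C1 + (\<Sum>e\<in>C-C1. card (e \<inter> S)) = 2 * card T" using s sp s1 by simp
  then have "even (card C1 + (\<Sum>e\<in>C-C1. card (e \<inter> S)))" by simp
  then have "even (card C1)" using ev by simp
  then show ?thesis unfolding C1_def .
qed



definition newE :: "'a \<Rightarrow> 'a \<Rightarrow> 'a \<Rightarrow> 'a \<Rightarrow> 'a set set \<Rightarrow> 'a set set" where
  "newE a b c d E = E - {{a,b},{c,d}} \<union> {{a,c},{b,d}}"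

lemma newE_sym1: "newE c d a b E = newE a b c d E"
  unfolding newE_def insert_commute[of c a] insert_commute[of d b] insert_commute[of "{c,d}"] by blast
lemma newE_sym2: "newE b a d c E = newE a b c d E"
  unfolding newE_def insert_commute[of b a] insert_commute[of d c] insert_commute[of "{b,d}"] by blast

definition newC :: "'a set set \<Rightarrow> 'a set set \<Rightarrow> 'a \<Rightarrow> 'a \<Rightarrow> 'a \<Rightarrow> 'a \<Rightarrow> 'a set set" where
  "newC C1 C2 a b c d = (C1 - {{a,b}}) \<union> (C2 - {{c,d}}) \<union> {{a,c},{b,d}}"

lemma newC_sym1: "newC C2 C1 c d a b = newC C1 C2 a b c d"
  unfolding newC_def insert_commute[of c a] insert_commute[of d b] by blast

lemma cyc_change: "is_cycle_subgraph F C \<Longrightarrow> C \<subseteq> F' \<Longrightarrow> is_cycle_subgraph F' C"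
  unfolding is_cycle_subgraph_def by blast

lemma card_insert_minus:
  assumes "finite A" "card A = 2" "x \<in> A" "y \<notin> A"
  shows "card (insert y (A - {x})) = 2"
  using assms by (simp add: card_Diff_singleton)

locale step =
  fixes V :: "'a set" and E W1 W2 C1 C2 a b c d
  assumes g: "graph V E"
    and uni: "\<forall>W\<in>components V E. \<exists>!C. is_cycle_subgraph (induced_edges E W) C"
    and W1: "W1 \<in> components V E" and W2: "W2 \<in> components V E" and W12: "W1 \<noteq> W2"
    and C1: "is_cycle_subgraph (induced_edges E W1) C1"
    and C2: "is_cycle_subgraph (induced_edges E W2) C2"
    and ab: "{a,b} \<in> C1" and cd: "{c,d} \<in> C2"
begin

abbreviation "E' \<equiv> newE a b c d E"

lemma finE: "finite E" using graph_finite[OF g] .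

lemma C1ind: "C1 \<subseteq> induced_edges E W1" using cyc_subF[OF C1] .
lemma C2ind: "C2 \<subseteq> induced_edges E W2" using cyc_subF[OF C2] .
lemma C1E: "C1 \<subseteq> E" using C1ind unfolding induced_edges_def by blast
lemma C1W: "\<Union>C1 \<subseteq> W1" using C1ind unfolding induced_edges_def by blast
lemma C2E: "C2 \<subseteq> E" using C2ind unfolding induced_edges_def by blast
lemma C2W: "\<Union>C2 \<subseteq> W2" using C2ind unfolding induced_edges_def by blast

lemma disj: "W1 \<inter> W2 = {}" using comp_disj[OF g W1 W2 W12] .

lemma abW: "a \<in> W1" "b \<in> W1"
proof -
  have "a \<in> \<Union>C1" "b \<in> \<Union>C1" using ab by blast+
  then show "a \<in> W1" "b \<in> W1" using C1W by (meson subsetD)+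
qed
lemma cdW: "c \<in> W2" "d \<in> W2"
proof -
  have "c \<in> \<Union>C2" "d \<in> \<Union>C2" using cd by blast+
  then show "c \<in> W2" "d \<in> W2" using C2W by (meson subsetD)+
qed

lemma abE0: "{a,b} \<in> E" using ab C1E by blast
lemma cdE0: "{c,d} \<in> E" using cd C2E by blast

lemma twE: "twosets E" unfolding twosets_def
proof
  fix e assume "e \<in> E"
  then obtain x y where "x \<noteq> y" "e = {x,y}" using graph_edge[OF g] by blast
  then show "\<exists>x y. x \<noteq> y \<and> e = {x, y}" by blast
qed

lemma tw_ne: assumes "twosets F" "{x,y} \<in> F" shows "x \<noteq> y"
proof
  assume xy: "x = y"
  obtain p q where pq: "p \<noteq> q" "{x,y} = {p,q}" using assms unfolding twosets_def by blast
  have "p \<in> {x}" "q \<in> {x}" using pq(2) xy by (metis insertI1 insert_absorb2, metis insertI1 insertI2 insert_absorb2)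
  then show False using pq(1) by simp
qed
lemma ab_ne: "a \<noteq> b" using tw_ne[OF twE] abE0 by simp
lemma cd_ne: "c \<noteq> d" using tw_ne[OF twE] cdE0 by simp

lemma ne4: "a \<noteq> c" "a \<noteq> d" "b \<noteq> c" "b \<noteq> d" using abW cdW disj by blast+

lemma ce: "f \<in> E \<Longrightarrow> x \<in> f \<Longrightarrow> x \<in> W \<Longrightarrow> W \<in> components V E \<Longrightarrow> f \<subseteq> W"
  using comp_edge[OF g] by blast

lemma abE: "{a,b} \<in> E" and cdE: "{c,d} \<in> E" using abE0 cdE0 by simp_all

lemma acE: "{a,c} \<notin> E"
proof
  assume "{a,c} \<in> E"
  then have "{a,c} \<subseteq> W1" using ce[of "{a,c}" a W1] abW W1 by simp
  then show False using cdW disj by blast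
qed
lemma bdE: "{b,d} \<notin> E"
proof
  assume "{b,d} \<in> E"
  then have "{b,d} \<subseteq> W1" using ce[of "{b,d}" b W1] abW W1 by simp
  then show False using cdW disj by blast
qed

lemma inter: "interchangeable E a b c d"
  unfolding interchangeable_def using abE cdE acE bdE ne4 by simp

lemma switch: "two_switch a b c d E = E'"
  unfolding two_switch_def newE_def using inter by simp

lemma abV: "a \<in> V" "b \<in> V" "c \<in> V" "d \<in> V" using abW cdW comp_sub[OF g W1] comp_sub[OF g W2] by auto

lemma gE': "graph V E'"
  unfolding graph_def
proof (intro conjI ballI)
  show "finite V" using g unfolding graph_def by simp
  fix e assume e: "e \<in> E'"
  show "\<exists>x y. x \<noteq> y \<and> x \<in> V \<and> y \<in> V \<and> e = {x, y}"
  proof (cases "e \<in> E")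
    case True then show ?thesis using graph_edge[OF g] by simp
  next
    case False
    then have "e = {a,c} \<or> e = {b,d}" using e unfolding newE_def by simp
    then show ?thesis using abV ne4 by blast
  qed
qed

lemma finE': "finite E'" using graph_finite[OF gE'] .
lemma twE': "twosets E'" using gE' unfolding graph_def twosets_def by blast

lemma E'cases: "f \<in> E' \<Longrightarrow> f = {a,c} \<or> f = {b,d} \<or> (f \<in> E \<and> f \<noteq> {a,b} \<and> f \<noteq> {c,d})"
  unfolding newE_def by blast

lemma abE': "{a,b} \<notin> E'" and cdE': "{c,d} \<notin> E'"
  unfolding newE_def using ne4 ab_ne cd_ne by (simp_all add: doubleton_eq_iff)

lemma C1uniq: "is_cycle_subgraph (induced_edges E W1) C \<Longrightarrow> C = C1"
  using uni W1 C1 by blast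

lemma fin_sub: "C \<subseteq> E' \<Longrightarrow> finite C" using finE' finite_subset by blast

lemma K1:
  assumes c: "is_cycle_subgraph E' C" and ac: "{a,c} \<in> C" and bd: "{b,d} \<in> C"
  shows "C1 - {{a,b}} \<subseteq> C"
proof -
  have CE': "C \<subseteq> E'" using c unfolding is_cycle_subgraph_def by blast
  have finC: "finite C" using fin_sub[OF CE'] .
  define D where "D = {f\<in>C. f \<subseteq> W1} \<union> {{a,b}}"
  have inW1: "f \<in> C \<Longrightarrow> f \<subseteq> W1 \<Longrightarrow> f \<in> E" for f
    using E'cases[of f] CE' abW cdW disj by blast
  have Dind: "D \<subseteq> induced_edges E W1"
    unfolding D_def induced_edges_def using inW1 abE abW by auto
  have finD: "finite D" unfolding D_def using finC by simp
  have twD: "twosets D" using Dind twE unfolding induced_edges_def twosets_def by blast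
  have abC: "{a,b} \<notin> C" using abE' CE' by blast
  have reg: "\<forall>v\<in>\<Union>D. card {e\<in>D. v\<in>e} = 2"
  proof
    fix v assume v: "v \<in> \<Union>D"
    have vW: "v \<in> W1" using v Dind unfolding induced_edges_def by blast
    have loc: "f \<in> C \<Longrightarrow> v \<in> f \<Longrightarrow> f \<noteq> {a,c} \<Longrightarrow> f \<noteq> {b,d} \<Longrightarrow> f \<subseteq> W1" for f
      using E'cases[of f] CE' ce[OF _ _ vW W1] by blast
    have cW1: "c \<notin> W1" "d \<notin> W1" using cdW disj by blast+
    show "card {e\<in>D. v\<in>e} = 2"
    proof (cases "v = a")
      case True
      have "e \<in> {e\<in>D. v\<in>e} \<longleftrightarrow> e = {a,b} \<or> (e \<in> {e\<in>C. v\<in>e} \<and> e \<noteq> {a,c})" for e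
      proof
        assume "e \<in> {e\<in>D. v\<in>e}"
        then have "e = {a,b} \<or> (e\<in>C \<and> e \<subseteq> W1 \<and> v \<in> e)" unfolding D_def by blast
        moreover have "e \<subseteq> W1 \<Longrightarrow> e \<noteq> {a,c}" using cW1 by blast
        ultimately show "e = {a,b} \<or> (e \<in> {e\<in>C. v\<in>e} \<and> e \<noteq> {a,c})" by blast
      next
        assume r: "e = {a,b} \<or> (e \<in> {e\<in>C. v\<in>e} \<and> e \<noteq> {a,c})"
        show "e \<in> {e\<in>D. v\<in>e}"
        proof (cases "e = {a,b}")
          case True then show ?thesis unfolding D_def using \<open>v = a\<close> by simp
        next
          case False
          then have e: "e \<in> C" "v \<in> e" "e \<noteq> {a,c}" using r by simp_all
          have "a \<notin> {b,d}" using ab_ne ne4 by simp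
          then have "e \<noteq> {b,d}" using e(2) \<open>v = a\<close> by blast
          then have "e \<subseteq> W1" using loc e by blast
          then show ?thesis unfolding D_def using e by simp
        qed
      qed
      then have eq: "{e\<in>D. v\<in>e} = insert {a,b} ({e\<in>C. v\<in>e} - {{a,c}})" by (intro set_eqI) simp
      have "v \<in> \<Union>C" using ac True by blast
        have c2: "card {e\<in>C. v\<in>e} = 2" using deg2[OF c \<open>v \<in> \<Union>C\<close>] .
      show ?thesis unfolding eq
        by (rule card_insert_minus) (use finC abC ac True c2 in simp_all)
    next
      case F1: False
      show ?thesis
      proof (cases "v = b")
        case True
        have "e \<in> {e\<in>D. v\<in>e} \<longleftrightarrow> e = {a,b} \<or> (e \<in> {e\<in>C. v\<in>e} \<and> e \<noteq> {b,d})" for e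
        proof
          assume "e \<in> {e\<in>D. v\<in>e}"
          then have "e = {a,b} \<or> (e\<in>C \<and> e \<subseteq> W1 \<and> v \<in> e)" unfolding D_def by blast
          moreover have "e \<subseteq> W1 \<Longrightarrow> e \<noteq> {b,d}" using cW1 by blast
          ultimately show "e = {a,b} \<or> (e \<in> {e\<in>C. v\<in>e} \<and> e \<noteq> {b,d})" by blast
        next
          assume r: "e = {a,b} \<or> (e \<in> {e\<in>C. v\<in>e} \<and> e \<noteq> {b,d})"
          show "e \<in> {e\<in>D. v\<in>e}"
          proof (cases "e = {a,b}")
            case True then show ?thesis unfolding D_def using \<open>v = b\<close> by simp
          next
            case False
            then have e: "e \<in> C" "v \<in> e" "e \<noteq> {b,d}" using r by simp_all
            have "b \<notin> {a,c}" using ab_ne ne4 by auto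
            then have "e \<noteq> {a,c}" using e(2) \<open>v = b\<close> by blast
            then have "e \<subseteq> W1" using loc e by blast
            then show ?thesis unfolding D_def using e by simp
          qed
        qed
        then have eq: "{e\<in>D. v\<in>e} = insert {a,b} ({e\<in>C. v\<in>e} - {{b,d}})" by (intro set_eqI) simp
        have "v \<in> \<Union>C" using bd True by blast
        have c2: "card {e\<in>C. v\<in>e} = 2" using deg2[OF c \<open>v \<in> \<Union>C\<close>] .
        show ?thesis unfolding eq
          by (rule card_insert_minus) (use finC abC bd True c2 in simp_all)
      next
        case False
        have vne: "v \<notin> {a,c}" "v \<notin> {b,d}" using F1 False vW cW1 by auto
        have "e \<in> {e\<in>D. v\<in>e} \<longleftrightarrow> e \<in> {e\<in>C. v\<in>e}" for e
        proof
          assume "e \<in> {e\<in>D. v\<in>e}"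
          then show "e \<in> {e\<in>C. v\<in>e}" unfolding D_def using F1 False by blast
        next
          assume e: "e \<in> {e\<in>C. v\<in>e}"
          then have "e \<noteq> {a,c}" "e \<noteq> {b,d}" using vne by blast+
          then have "e \<subseteq> W1" using loc e by blast
          then show "e \<in> {e\<in>D. v\<in>e}" unfolding D_def using e by blast
        qed
        then have eq: "{e\<in>D. v\<in>e} = {e\<in>C. v\<in>e}" by (intro set_eqI) simp
        then have "v \<in> \<Union>C" using v by blast
        then show ?thesis using eq deg2[OF c] by simp
      qed
    qed
  qed
  have "D \<noteq> {}" unfolding D_def by blast
  then obtain C' where C': "C' \<subseteq> D" "is_cycle_subgraph D C'"
    using cyc_exists[OF finD _ twD reg] by blast
  then have "is_cycle_subgraph (induced_edges E W1) C'" using cyc_change Dind by blast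
  then have "C' = C1" using C1uniq by blast
  then show ?thesis using C' unfolding D_def by blast
qed

lemma K2:
  assumes c: "is_cycle_subgraph E' C" and ac: "{a,c} \<in> C" and bd: "{b,d} \<notin> C"
  shows False
proof -
  have CE': "C \<subseteq> E'" using c unfolding is_cycle_subgraph_def by blast
  have finC: "finite C" using fin_sub[OF CE'] .
  have twC: "twosets C" using CE' twE' unfolding twosets_def by blast
  have "{e\<in>C. card (e \<inter> W1) = 1} = {{a,c}}"
  proof (intro set_eqI iffI)
    fix e assume e: "e \<in> {e\<in>C. card (e \<inter> W1) = 1}"
    show "e \<in> {{a,c}}"
    proof (rule ccontr)
      assume ne: "e \<notin> {{a,c}}"
      then have eE: "e \<in> E" using E'cases[of e] e CE' bd by blast
      obtain x y where xy: "x \<noteq> y" "e = {x,y}" using twE eE unfolding twosets_def by blast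
      have "card (e \<inter> W1) \<in> {0,2}"
      proof (cases "x \<in> W1 \<or> y \<in> W1")
        case True
        then have "e \<subseteq> W1" using ce[OF eE _ _ W1] xy by blast
        then show ?thesis using xy by (simp add: Int_absorb2)
      next
        case False then show ?thesis using xy by auto
      qed
      then show False using e by auto
    qed
  next
    fix e assume "e \<in> {{a,c}}"
    then show "e \<in> {e\<in>C. card (e \<inter> W1) = 1}" using ac abW cdW disj
      by (auto simp: Int_insert_left)
  qed
  moreover have "even (card {e\<in>C. card (e \<inter> W1) = 1})"
    using parity[OF finC twC] deg2[OF c] by blast
  ultimately show False by simp
qed

lemma K3:
  assumes c: "is_cycle_subgraph E' C" and ac: "{a,c} \<notin> C" and bd: "{b,d} \<notin> C"
  shows "\<exists>W\<in>components V E. W \<noteq> W1 \<and> W \<noteq> W2 \<and> C \<subseteq> induced_edges E W"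
proof -
  have CE': "C \<subseteq> E'" using c unfolding is_cycle_subgraph_def by blast
  have CE: "C \<subseteq> E" using CE' ac bd E'cases by blast
  then obtain W where W: "W \<in> components V E" "C \<subseteq> induced_edges E W"
    using cyc_in_comp[OF g cyc_change[OF c CE]] by blast
  have cW: "is_cycle_subgraph (induced_edges E W) C" using cyc_change[OF c W(2)] .
  have "W \<noteq> W1"
  proof
    assume "W = W1"
    then have "C = C1" using cW C1uniq by blast
    then show False using ab CE' abE' by blast
  qed
  moreover have "W \<noteq> W2"
  proof
    assume "W = W2"
    then have "C = C2" using cW uni W2 C2 by blast
    then show False using cd CE' cdE' by blast
  qed
  ultimately show ?thesis using W by blast
qed

end


context step begin

lemma sym1: "step V E W2 W1 C2 C1 c d a b"
  by (unfold_locales) (use g uni W1 W2 W12 C1 C2 ab cd in auto)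

lemma sym2: "step V E W1 W2 C1 C2 b a d c"
proof (unfold_locales)
  show "{b,a} \<in> C1" using ab by (simp add: insert_commute)
  show "{d,c} \<in> C2" using cd by (simp add: insert_commute)
qed (use g uni W1 W2 W12 C1 C2 in auto)

abbreviation "C0 \<equiv> newC C1 C2 a b c d"
abbreviation "W12 \<equiv> W1 \<union> W2"

lemma cW1: "c \<notin> W1" "d \<notin> W1" using cdW disj by blast+
lemma aW2: "a \<notin> W2" "b \<notin> W2" using abW disj by blast+

lemma cdC1: "{c,d} \<notin> C1"
proof
  assume "{c,d} \<in> C1" then have "c \<in> \<Union>C1" by blast
  then show False using C1W cW1 by blast
qed
lemma abC2: "{a,b} \<notin> C2"
proof
  assume "{a,b} \<in> C2" then have "a \<in> \<Union>C2" by blast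
  then show False using C2W aW2 by blast
qed

lemma C0E': "C0 \<subseteq> E'"
proof
  fix e assume e: "e \<in> C0"
  show "e \<in> E'"
  proof (cases "e \<in> C1 - {{a,b}}")
    case True then have "e \<in> E" "e \<noteq> {a,b}" "e \<noteq> {c,d}" using C1E cdC1 by auto
    then show ?thesis unfolding newE_def by simp
  next
    case F: False
    show ?thesis
    proof (cases "e \<in> C2 - {{c,d}}")
      case True then have "e \<in> E" "e \<noteq> {a,b}" "e \<noteq> {c,d}" using C2E abC2 by auto
      then show ?thesis unfolding newE_def by simp
    next
      case False then have "e = {a,c} \<or> e = {b,d}" using e F unfolding newC_def by blast
      then show ?thesis unfolding newE_def by blast
    qed
  qed
qed

lemma C0fin: "finite C0" using fin_sub[OF C0E'] .
lemma C0tw: "twosets C0" using C0E' twE' unfolding twosets_def by blast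
lemma C0ac: "{a,c} \<in> C0" and C0bd: "{b,d} \<in> C0" unfolding newC_def by simp_all
lemma C0ne: "C0 \<noteq> {}" using C0ac by blast

lemma C0W: "\<Union>C0 \<subseteq> W12"
proof
  fix v assume "v \<in> \<Union>C0"
  then obtain e where e: "e \<in> C0" "v \<in> e" by blast
  show "v \<in> W12"
  proof (cases "e \<in> C1")
    case True then show ?thesis using C1W e by blast
  next
    case F: False
    show ?thesis
    proof (cases "e \<in> C2")
      case True then show ?thesis using C2W e by blast
    next
      case False then have "e = {a,c} \<or> e = {b,d}" using e F unfolding newC_def by blast
      then show ?thesis using e abW cdW by blast
    qed
  qed
qed

lemma acC1: "{a,c} \<notin> C1" using acE C1E by blast
lemma bdC1: "{b,d} \<notin> C1" using bdE C1E by blast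

lemma C0reg1:
  assumes vW: "v \<in> W1" and v: "v \<in> \<Union>C0"
  shows "card {e\<in>C0. v\<in>e} = 2"
proof -
  have notC2: "e \<in> C2 \<Longrightarrow> v \<notin> e" for e using C2W vW disj by blast
  show ?thesis
  proof (cases "v = a")
    case True
    have "e \<in> {e\<in>C0. v\<in>e} \<longleftrightarrow> e = {a,c} \<or> (e \<in> {e\<in>C1. v\<in>e} \<and> e \<noteq> {a,b})" for e
    proof
      assume e: "e \<in> {e\<in>C0. v\<in>e}"
      have "a \<notin> {b,d}" using ab_ne ne4 by simp
      then have "e \<noteq> {b,d}" using e True by blast
      moreover have "e \<notin> C2 - {{c,d}}" using notC2 e by blast
      ultimately show "e = {a,c} \<or> (e \<in> {e\<in>C1. v\<in>e} \<and> e \<noteq> {a,b})" using e unfolding newC_def by blast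
    next
      assume "e = {a,c} \<or> (e \<in> {e\<in>C1. v\<in>e} \<and> e \<noteq> {a,b})"
      then show "e \<in> {e\<in>C0. v\<in>e}" unfolding newC_def using True by blast
    qed
    then have eq: "{e\<in>C0. v\<in>e} = insert {a,c} ({e\<in>C1. v\<in>e} - {{a,b}})" by (intro set_eqI) simp
    have "v \<in> \<Union>C1" using ab True by blast
    have c2: "card {e\<in>C1. v\<in>e} = 2" using deg2[OF C1 \<open>v \<in> \<Union>C1\<close>] .
    have finC1: "finite C1" using C1E finE finite_subset by blast
    show ?thesis unfolding eq
      by (rule card_insert_minus) (use finC1 acC1 ab True c2 in simp_all)
  next
    case F1: False
    show ?thesis
    proof (cases "v = b")
      case True
      have "e \<in> {e\<in>C0. v\<in>e} \<longleftrightarrow> e = {b,d} \<or> (e \<in> {e\<in>C1. v\<in>e} \<and> e \<noteq> {a,b})" for e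
      proof
        assume e: "e \<in> {e\<in>C0. v\<in>e}"
        have "b \<notin> {a,c}" using ab_ne ne4 by auto
        then have "e \<noteq> {a,c}" using e True by blast
        moreover have "e \<notin> C2 - {{c,d}}" using notC2 e by blast
        ultimately show "e = {b,d} \<or> (e \<in> {e\<in>C1. v\<in>e} \<and> e \<noteq> {a,b})" using e unfolding newC_def by blast
      next
        assume "e = {b,d} \<or> (e \<in> {e\<in>C1. v\<in>e} \<and> e \<noteq> {a,b})"
        then show "e \<in> {e\<in>C0. v\<in>e}" unfolding newC_def using True by blast
      qed
      then have eq: "{e\<in>C0. v\<in>e} = insert {b,d} ({e\<in>C1. v\<in>e} - {{a,b}})" by (intro set_eqI) simp
      have "v \<in> \<Union>C1" using ab True by blast
      have c2: "card {e\<in>C1. v\<in>e} = 2" using deg2[OF C1 \<open>v \<in> \<Union>C1\<close>] .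
      have finC1: "finite C1" using C1E finE finite_subset by blast
      show ?thesis unfolding eq
        by (rule card_insert_minus) (use finC1 bdC1 ab True c2 in simp_all)
    next
      case False
      have vne: "v \<notin> {a,c}" "v \<notin> {b,d}" "v \<notin> {a,b}" using F1 False vW cW1 by auto
      have "e \<in> {e\<in>C0. v\<in>e} \<longleftrightarrow> e \<in> {e\<in>C1. v\<in>e}" for e
      proof
        assume e: "e \<in> {e\<in>C0. v\<in>e}"
        then have "e \<noteq> {a,c}" "e \<noteq> {b,d}" using vne by blast+
        moreover have "e \<notin> C2 - {{c,d}}" using notC2 e by blast
        ultimately show "e \<in> {e\<in>C1. v\<in>e}" using e unfolding newC_def by blast
      next
        assume e: "e \<in> {e\<in>C1. v\<in>e}"
        then have "e \<noteq> {a,b}" using vne by blast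
        then show "e \<in> {e\<in>C0. v\<in>e}" using e unfolding newC_def by blast
      qed
      then have eq: "{e\<in>C0. v\<in>e} = {e\<in>C1. v\<in>e}" by (intro set_eqI) simp
      then have "v \<in> \<Union>C1" using v by blast
      then show ?thesis using eq deg2[OF C1] by simp
    qed
  qed
qed

end


context step begin

lemma C0reg: "\<forall>v\<in>\<Union>C0. card {e\<in>C0. v\<in>e} = 2"
proof
  fix v assume v: "v \<in> \<Union>C0"
  then have "v \<in> W1 \<or> v \<in> W2" using C0W by blast
  then show "card {e\<in>C0. v\<in>e} = 2"
  proof
    assume "v \<in> W1" then show ?thesis using C0reg1 v by blast
  next
    assume vW: "v \<in> W2"
    have "v \<in> \<Union>(newC C2 C1 c d a b)" by (subst newC_sym1) (fact v)
    then have "card {e\<in>newC C2 C1 c d a b. v\<in>e} = 2" using step.C0reg1[OF sym1 vW] by blast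
    then show ?thesis by (subst (asm) newC_sym1)
  qed
qed

lemma K1b:
  assumes c: "is_cycle_subgraph E' C" and ac: "{a,c} \<in> C" and bd: "{b,d} \<in> C"
  shows "C2 - {{c,d}} \<subseteq> C"
proof -
  have c': "is_cycle_subgraph (newE c d a b E) C" by (subst newE_sym1) (fact c)
  have "{c,a} \<in> C" "{d,b} \<in> C" using ac bd by (simp_all add: insert_commute)
  then show ?thesis using step.K1[OF sym1 c'] by blast
qed

lemma K2b:
  assumes c: "is_cycle_subgraph E' C" and ac: "{a,c} \<notin> C" and bd: "{b,d} \<in> C"
  shows False
proof -
  have c': "is_cycle_subgraph (newE b a d c E) C" by (subst newE_sym2) (fact c)
  show False using step.K2[OF sym2 c' bd ac] .
qed

lemma cyc_cases:
  assumes c: "is_cycle_subgraph E' C"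
  shows "({a,c} \<in> C \<and> {b,d} \<in> C) \<or> ({a,c} \<notin> C \<and> {b,d} \<notin> C)"
  using K2[OF c] K2b[OF c] by blast

lemma both_sub:
  assumes c: "is_cycle_subgraph E' C" and ac: "{a,c} \<in> C" and bd: "{b,d} \<in> C"
  shows "C0 \<subseteq> C"
  using K1[OF c ac bd] K1b[OF c ac bd] ac bd unfolding newC_def by blast

lemma other_comp_disj:
  assumes W: "W \<in> components V E" "W \<noteq> W1" "W \<noteq> W2"
  shows "W \<inter> W12 = {}"
  using comp_disj[OF g W(1) W1 W(2)] comp_disj[OF g W(1) W2 W(3)] by blast

lemma neither_bad:
  assumes c: "is_cycle_subgraph E' C" and ac: "{a,c} \<notin> C" and bd: "{b,d} \<notin> C"
    and meet: "\<Union>C \<inter> W12 \<noteq> {}"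
  shows False
proof -
  obtain W where W: "W \<in> components V E" "W \<noteq> W1" "W \<noteq> W2" "C \<subseteq> induced_edges E W"
    using K3[OF c ac bd] by blast
  have "\<Union>C \<subseteq> W" using W(4) unfolding induced_edges_def by blast
  then show False using other_comp_disj[OF W(1-3)] meet by blast
qed

lemma C0cyc: "is_cycle_subgraph E' C0"
proof -
  obtain C where C: "C \<subseteq> C0" "is_cycle_subgraph C0 C"
    using cyc_exists[OF C0fin C0ne C0tw C0reg] by blast
  have c: "is_cycle_subgraph E' C" using cyc_change[OF C(2)] C(1) C0E' by blast
  obtain e where e: "e \<in> C" using cyc_ne[OF c] by blast
  then obtain x y where xy: "x \<noteq> y" "e = {x,y}" using C(1) C0tw unfolding twosets_def by blast
  have "x \<in> \<Union>C0" using e xy C(1) by blast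
  then have "x \<in> \<Union>C \<inter> W12" using C0W e xy by blast
  then have "\<Union>C \<inter> W12 \<noteq> {}" by blast
  then have "{a,c} \<in> C \<and> {b,d} \<in> C" using cyc_cases[OF c] neither_bad[OF c] by blast
  then have "C0 \<subseteq> C" using both_sub[OF c] by blast
  then have "C = C0" using C(1) by (rule subset_antisym[rotated])
  then show ?thesis using c by simp
qed

lemma C0ind: "C0 \<subseteq> induced_edges E' W12"
  using C0E' C0W unfolding induced_edges_def by blast

lemma W12uniq:
  assumes c: "is_cycle_subgraph (induced_edges E' W12) C"
  shows "C = C0"
proof -
  have CE': "C \<subseteq> E'" using cyc_subF[OF c] unfolding induced_edges_def by blast
  have CW: "\<Union>C \<subseteq> W12" using cyc_subF[OF c] unfolding induced_edges_def by blast
  have c': "is_cycle_subgraph E' C" using cyc_change[OF c CE'] .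
  obtain e where e: "e \<in> C" using cyc_ne[OF c] by blast
  then obtain x y where xy: "x \<noteq> y" "e = {x,y}" using CE' twE' unfolding twosets_def by blast
  then have "x \<in> \<Union>C \<inter> W12" using CW e by blast
  then have "\<Union>C \<inter> W12 \<noteq> {}" by blast
  then have "{a,c} \<in> C \<and> {b,d} \<in> C" using cyc_cases[OF c'] neither_bad[OF c'] by blast
  then have sub: "C0 \<subseteq> C" using both_sub[OF c'] by blast
  have twC: "twosets C" using CE' twE' unfolding twosets_def by blast
  show ?thesis using cyc_sub_eq[OF c' C0cyc sub fin_sub[OF CE'] twC] by simp
qed

lemma W12_unique_cycle: "\<exists>!C. is_cycle_subgraph (induced_edges E' W12) C"
proof
  show "is_cycle_subgraph (induced_edges E' W12) C0" using cyc_change[OF C0cyc C0ind] .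
next
  fix C assume "is_cycle_subgraph (induced_edges E' W12) C"
  then show "C = C0" using W12uniq by blast
qed

end


lemma comp_img: "components V E = cls V E ` V"
  unfolding components_def cls_def by simp

lemma cls_self: "graph V E \<Longrightarrow> x \<in> V \<Longrightarrow> x \<in> cls V E x"
  using cls_mem by (metis rtranclp.rtrancl_refl)

context step begin

abbreviation "R \<equiv> (adj E)\<^sup>*\<^sup>*"
abbreviation "R' \<equiv> (adj E')\<^sup>*\<^sup>*"

lemma C0conn: "u \<in> \<Union>C0 \<Longrightarrow> v \<in> \<Union>C0 \<Longrightarrow> R' u v"
  using cyc_conn[OF C0cyc] rtr_mono C0E' by metis

lemma abcd_C0: "a \<in> \<Union>C0" "b \<in> \<Union>C0" "c \<in> \<Union>C0" "d \<in> \<Union>C0"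
  using C0ac C0bd by blast+

lemma edge_R': assumes "adj E u v" shows "R' u v"
proof -
  have f: "{u,v} \<in> E" "u \<noteq> v" using assms unfolding adj_def by simp_all
  show ?thesis
  proof (cases "{u,v} = {a,b} \<or> {u,v} = {c,d}")
    case True
    then have "u \<in> {a,b,c,d}" "v \<in> {a,b,c,d}" by blast+
    then have "u \<in> \<Union>C0" "v \<in> \<Union>C0" using abcd_C0 by blast+
    then show ?thesis using C0conn by simp
  next
    case False
    then have "{u,v} \<in> E'" using f unfolding newE_def by simp
    then have "adj E' u v" using f unfolding adj_def by simp
    then show ?thesis by (rule r_into_rtranclp)
  qed
qed

lemma R_R': "R x y \<Longrightarrow> R' x y"
proof (induction rule: rtranclp_induct)
  case base then show ?case by simp
next
  case (step y z) then show ?case using edge_R'[OF step(2)] rtranclp_trans[of "adj E'" x y z] by simp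
qed

lemma W1_cls: "W1 = cls V E a" using comp_cls[OF g W1 abW(1)] by simp
lemma W2_cls: "W2 = cls V E c" using comp_cls[OF g W2 cdW(1)] by simp

lemma W12_R': assumes x: "x \<in> W12" and y: "y \<in> W12" shows "R' x y"
proof -
  have ac': "R' a c" using C0conn[OF abcd_C0(1) abcd_C0(3)] .
  have ca': "R' c a" using C0conn[OF abcd_C0(3) abcd_C0(1)] .
  have toA: "z \<in> W1 \<Longrightarrow> R' a z" for z using R_R'[of a z] cls_mem[OF g abV(1), of z] W1_cls by simp
  have toC: "z \<in> W2 \<Longrightarrow> R' c z" for z using R_R'[of c z] cls_mem[OF g abV(3), of z] W2_cls by simp
  have fromA: "R' x a"
  proof (cases "x \<in> W1")
    case True show ?thesis by (rule rtr_sym[OF toA[OF True]])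
  next
    case False then have "x \<in> W2" using x by blast
    then have "R' x c" using rtr_sym toC by metis
    then show ?thesis using ca' rtranclp_trans[of "adj E'" x c a] by simp
  qed
  have aY: "R' a y"
  proof (cases "y \<in> W1")
    case True then show ?thesis using toA by blast
  next
    case False then have "y \<in> W2" using y by blast
    then have "R' c y" using toC by blast
    then show ?thesis using ac' rtranclp_trans[of "adj E'" a c y] by simp
  qed
  show ?thesis using fromA aY rtranclp_trans[of "adj E'" x a y] by simp
qed

lemma W12_closed: "y \<in> W12 \<Longrightarrow> R y z \<Longrightarrow> z \<in> W12"
  using comp_closed[OF g W1] comp_closed[OF g W2] by blast

lemma R'_R: "R' x y \<Longrightarrow> R x y \<or> (x \<in> W12 \<and> y \<in> W12)"
proof (induction rule: rtranclp_induct)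
  case base then show ?case by simp
next
  case (step y z)
  have yz: "{y,z} \<in> E'" "y \<noteq> z" using step(2) unfolding adj_def by simp_all
  show ?case
  proof (cases "{y,z} = {a,c} \<or> {y,z} = {b,d}")
    case True
    then have "y \<in> {a,b,c,d}" "z \<in> {a,b,c,d}" by blast+
    then have yW: "y \<in> W12" and zW: "z \<in> W12" using abW cdW by blast+
    have "x \<in> W12"
    proof (cases "R x y")
      case True then have "R y x" by (rule rtr_sym)
      then show ?thesis using W12_closed yW by blast
    next
      case False then show ?thesis using step(3) by blast
    qed
    then show ?thesis using zW by blast
  next
    case False
    then have "{y,z} \<in> E" using yz(1) unfolding newE_def by blast
    then have "adj E y z" using yz(2) unfolding adj_def by simp
    then have Ryz: "R y z" by (rule r_into_rtranclp)
    show ?thesis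
    proof (cases "R x y")
      case True then show ?thesis using Ryz rtranclp_trans[of "adj E" x y z] by simp
    next
      case False then have "x \<in> W12" "y \<in> W12" using step(3) by blast+
      then show ?thesis using W12_closed Ryz by blast
    qed
  qed
qed

lemma cls_new: assumes x: "x \<in> V"
  shows "cls V E' x = (if x \<in> W12 then W12 else cls V E x)"
proof (cases "x \<in> W12")
  case True
  have "y \<in> cls V E' x \<longleftrightarrow> y \<in> W12" for y
  proof
    assume "y \<in> cls V E' x"
    then have "R' x y" using cls_mem[OF gE' x] by simp
    then show "y \<in> W12" using R'_R W12_closed True by blast
  next
    assume "y \<in> W12" then have "R' x y" using W12_R' True by blast
    then show "y \<in> cls V E' x" using cls_mem[OF gE' x] by simp
  qed
  then have "cls V E' x = W12" by (intro set_eqI) simp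
  then show ?thesis using True by simp
next
  case False
  have "y \<in> cls V E' x \<longleftrightarrow> y \<in> cls V E x" for y
  proof
    assume "y \<in> cls V E' x"
    then have "R' x y" using cls_mem[OF gE' x] by simp
    then have "R x y" using R'_R False by blast
    then show "y \<in> cls V E x" using cls_mem[OF g x] by simp
  next
    assume "y \<in> cls V E x"
    then have "R x y" using cls_mem[OF g x] by simp
    then have "R' x y" by (rule R_R')
    then show "y \<in> cls V E' x" using cls_mem[OF gE' x] by simp
  qed
  then have "cls V E' x = cls V E x" by (intro set_eqI) simp
  then show ?thesis using False by simp
qed

lemma comps_new: "components V E' = insert W12 (components V E - {W1, W2})"
proof (intro set_eqI iffI)
  fix W assume "W \<in> components V E'"
  then obtain x where x: "x \<in> V" "W = cls V E' x" unfolding comp_img by blast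
  show "W \<in> insert W12 (components V E - {W1, W2})"
  proof (cases "x \<in> W12")
    case True then show ?thesis using x cls_new by simp
  next
    case False
    then have W: "W = cls V E x" using x cls_new by simp
    have Wc: "W \<in> components V E" using W x(1) unfolding comp_img by blast
    have "x \<in> W" using W cls_self[OF g x(1)] by simp
    then have "W \<noteq> W1" "W \<noteq> W2" using False by blast+
    then show ?thesis using Wc by blast
  qed
next
  fix W assume W: "W \<in> insert W12 (components V E - {W1, W2})"
  show "W \<in> components V E'"
  proof (cases "W = W12")
    case True
    have "cls V E' a = W12" using cls_new[OF abV(1)] abW by simp
    then show ?thesis using True abV(1) unfolding comp_img by blast
  next
    case False
    then have Wc: "W \<in> components V E" "W \<noteq> W1" "W \<noteq> W2" using W by blast+
    then obtain x where x: "x \<in> V" "W = cls V E x" unfolding comp_img by blast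
    have "x \<in> W" using x cls_self[OF g x(1)] by simp
    then have "x \<notin> W12" using other_comp_disj[OF Wc] by blast
    then have "cls V E' x = W" using cls_new[OF x(1)] x(2) by simp
    then show ?thesis using x(1) unfolding comp_img by blast
  qed
qed

lemma kappa_new: "kappa V E' < kappa V E"
proof -
  let ?K = "components V E"
  have finK: "finite ?K" using comp_finite[OF g] .
  have notin: "W12 \<notin> ?K - {W1, W2}"
  proof
    assume "W12 \<in> ?K - {W1, W2}"
    then have "W12 \<in> ?K" "W12 \<noteq> W1" by blast+
    moreover have "W12 = cls V E a" using comp_cls[OF g \<open>W12 \<in> ?K\<close>] abW by blast
    ultimately show False using W1_cls by simp
  qed
  have "card (?K - {W1, W2}) = card ?K - 2"
  proof -
    have "card (?K - {W1, W2}) = card ?K - card {W1, W2}"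
      using W1 W2 finK by (intro card_Diff_subset) auto
    then show ?thesis using W12 by simp
  qed
  moreover have "card ?K \<ge> 2"
  proof -
    have "{W1, W2} \<subseteq> ?K" using W1 W2 by blast
    then have "card {W1, W2} \<le> card ?K" using finK by (rule card_mono[rotated])
    then show ?thesis using W12 by simp
  qed
  moreover have "card (components V E') = Suc (card (?K - {W1, W2}))"
    unfolding comps_new using notin finK by simp
  ultimately show ?thesis unfolding kappa_def by simp
qed

lemma induced_other:
  assumes W: "W \<in> components V E" "W \<noteq> W1" "W \<noteq> W2"
  shows "induced_edges E' W = induced_edges E W"
proof -
  have dj: "W \<inter> W12 = {}" using other_comp_disj[OF W] .
  have "a \<notin> W" "b \<notin> W" "c \<notin> W" "d \<notin> W" using dj abW cdW by blast+
  then have n: "\<not> {a,b} \<subseteq> W" "\<not> {c,d} \<subseteq> W" "\<not> {a,c} \<subseteq> W" "\<not> {b,d} \<subseteq> W" by simp_all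
  show ?thesis
  proof (intro set_eqI iffI)
    fix f assume "f \<in> induced_edges E' W"
    then have f: "f \<in> E'" "f \<subseteq> W" unfolding induced_edges_def by simp_all
    then have "f \<noteq> {a,c}" "f \<noteq> {b,d}" using n by blast+
    then have "f \<in> E" using f(1) unfolding newE_def by blast
    then show "f \<in> induced_edges E W" using f(2) unfolding induced_edges_def by simp
  next
    fix f assume "f \<in> induced_edges E W"
    then have f: "f \<in> E" "f \<subseteq> W" unfolding induced_edges_def by simp_all
    then have "f \<noteq> {a,b}" "f \<noteq> {c,d}" using n by blast+
    then have "f \<in> E'" using f(1) unfolding newE_def by blast
    then show "f \<in> induced_edges E' W" using f(2) unfolding induced_edges_def by simp
  qed
qed

lemma uni_new: "\<forall>W\<in>components V E'. \<exists>!C. is_cycle_subgraph (induced_edges E' W) C"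
proof
  fix W assume "W \<in> components V E'"
  then have "W = W12 \<or> (W \<in> components V E \<and> W \<noteq> W1 \<and> W \<noteq> W2)" unfolding comps_new by blast
  then show "\<exists>!C. is_cycle_subgraph (induced_edges E' W) C"
  proof
    assume "W = W12" then show ?thesis using W12_unique_cycle by simp
  next
    assume W: "W \<in> components V E \<and> W \<noteq> W1 \<and> W \<noteq> W2"
    then show ?thesis using induced_other uni by simp
  qed
qed

end


definition U :: "'a set \<Rightarrow> 'a set set \<Rightarrow> bool" where
  "U V E \<longleftrightarrow> graph V E \<and> (\<forall>W\<in>components V E. \<exists>!C. is_cycle_subgraph (induced_edges E W) C)"

lemma card_one_iff_ex1: "card {C. P C} = 1 \<longleftrightarrow> (\<exists>!C. P C)"
proof
  assume "card {C. P C} = 1"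
  then obtain x where "{C. P C} = {x}" by (rule card_1_singletonE)
  then show "\<exists>!C. P C" by (metis mem_Collect_eq singletonD singletonI)
next
  assume "\<exists>!C. P C"
  then obtain x where "P x" "\<forall>y. P y \<longrightarrow> y = x" by blast
  then have "{C. P C} = {x}" by blast
  then show "card {C. P C} = 1" by simp
qed

lemma U_unicyclic: assumes u: "U V E" and W: "W \<in> components V E" shows "unicyclic W (induced_edges E W)"
proof -
  have g: "graph V E" using u unfolding U_def by simp
  have "\<exists>!C. is_cycle_subgraph (induced_edges E W) C" using u W unfolding U_def by simp
  then have "card {C. is_cycle_subgraph (induced_edges E W) C} = 1" by (rule card_one_iff_ex1[THEN iffD2])
  then have "cycles (induced_edges E W) = 1" unfolding cycles_def .
  then show ?thesis unfolding unicyclic_def using comp_induced_graph[OF g W] comp_induced_conn[OF g W] by simp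
qed

lemma U_pf: assumes u: "U V E" shows "pseudoforest V E"
  unfolding pseudoforest_def
proof (intro conjI ballI disjI2)
  show "graph V E" using u unfolding U_def by simp
  fix W assume "W \<in> components V E" then show "unicyclic W (induced_edges E W)" using U_unicyclic[OF u] by simp
qed

lemma two_elems:
  assumes "finite K" "card K \<ge> 2"
  shows "\<exists>x\<in>K. \<exists>y\<in>K. x \<noteq> y"
proof (rule ccontr)
  assume "\<not> ?thesis"
  then have "\<forall>x\<in>K. \<forall>y\<in>K. x = y" by blast
  then have "card K \<le> Suc 0" using card_le_Suc0_iff_eq[OF assms(1)] by blast
  then show False using assms(2) by simp
qed

lemma step_exists:
  assumes u: "U V E" and k: "kappa V E \<ge> 2"
  shows "\<exists>a b c d. p_switch V E a b c d \<and> U V (two_switch a b c d E) \<and>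
           kappa V (two_switch a b c d E) < kappa V E"
proof -
  have g: "graph V E" and uni: "\<forall>W\<in>components V E. \<exists>!C. is_cycle_subgraph (induced_edges E W) C"
    using u unfolding U_def by simp_all
  obtain W1 W2 where W: "W1 \<in> components V E" "W2 \<in> components V E" "W1 \<noteq> W2"
    using two_elems[OF comp_finite[OF g]] k unfolding kappa_def by blast
  obtain C1 where C1: "is_cycle_subgraph (induced_edges E W1) C1" using uni W(1) by blast
  obtain C2 where C2: "is_cycle_subgraph (induced_edges E W2) C2" using uni W(2) by blast
  have twE: "twosets E" using g unfolding graph_def twosets_def by blast
  obtain e1 where e1: "e1 \<in> C1" using cyc_ne[OF C1] by blast
  have "e1 \<in> E" using e1 cyc_subF[OF C1] unfolding induced_edges_def by blast
  then obtain a b where ab: "e1 = {a,b}" using twE unfolding twosets_def by blast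
  obtain e2 where e2: "e2 \<in> C2" using cyc_ne[OF C2] by blast
  have "e2 \<in> E" using e2 cyc_subF[OF C2] unfolding induced_edges_def by blast
  then obtain c d where cd: "e2 = {c,d}" using twE unfolding twosets_def by blast
  interpret s: step V E W1 W2 C1 C2 a b c d
    by (unfold_locales) (use g uni W C1 C2 e1 e2 ab cd in simp_all)
  have uE': "U V (newE a b c d E)" unfolding U_def using s.gE' s.uni_new by simp
  have "p_switch V E a b c d"
    unfolding p_switch_def s.switch using U_pf[OF u] s.inter U_pf[OF uE'] by simp
  then show ?thesis using uE' s.kappa_new s.switch
    by (intro exI[of _ a] exI[of _ b] exI[of _ c] exI[of _ d]) simp
qed

lemma U_final:
  assumes u: "U V E" and k: "kappa V E = 1"
  shows "unicyclic V E"
proof -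
  have g: "graph V E" using u unfolding U_def by simp
  obtain W where KW: "components V E = {W}" using k unfolding kappa_def by (rule card_1_singletonE)
  have W: "W \<in> components V E" using KW by simp
  have "V \<subseteq> W"
  proof
    fix x assume x: "x \<in> V"
    have "cls V E x \<in> components V E" using x unfolding comp_img by blast
    then have "cls V E x = W" using KW by simp
    then show "x \<in> W" using cls_self[OF g x] by simp
  qed
  then have VW: "V = W" using comp_sub[OF g W] by blast
  have fV: "f \<subseteq> V" if f: "f \<in> E" for f
  proof -
    obtain x y where "x \<in> V" "y \<in> V" "f = {x,y}" using graph_edge[OF g f] by blast
    then show ?thesis by simp
  qed
  have "induced_edges E V = E" unfolding induced_edges_def using fV by blast
  then show ?thesis using U_unicyclic[OF u W] VW by simp
qed

lemma main_ind:
  "U V E \<Longrightarrow> kappa V E = n \<Longrightarrow> V \<noteq> {} \<Longrightarrow>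
   \<exists>(k::nat) (Es :: nat \<Rightarrow> 'a set set). Es 0 = E \<and>
           (\<forall>i<k. \<exists>a b c d. p_switch V (Es i) a b c d \<and> Es (Suc i) = two_switch a b c d (Es i)) \<and>
           unicyclic V (Es k)"
proof (induction n arbitrary: E rule: less_induct)
  case (less n)
  have g: "graph V E" using less.prems(1) unfolding U_def by simp
  have "components V E \<noteq> {}" using less.prems(3) unfolding components_def by simp
  then have "kappa V E \<ge> 1" unfolding kappa_def using comp_finite[OF g]
    by (simp add: Suc_leI card_gt_0_iff)
  show ?case
  proof (cases "kappa V E = 1")
    case True
    have "unicyclic V E" using U_final[OF less.prems(1) True] .
    then show ?thesis by (intro exI[of _ "0::nat"] exI[of _ "\<lambda>_. E"]) simp
  next
    case False
    then have "kappa V E \<ge> 2" using \<open>kappa V E \<ge> 1\<close> by simp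
    then obtain a b c d where st: "p_switch V E a b c d" "U V (two_switch a b c d E)"
        "kappa V (two_switch a b c d E) < kappa V E"
      using step_exists[OF less.prems(1)] by blast
    let ?E' = "two_switch a b c d E"
    obtain k Es where IH: "Es 0 = ?E'"
      "\<forall>i<k. \<exists>a b c d. p_switch V (Es i) a b c d \<and> Es (Suc i) = two_switch a b c d (Es i)"
      "unicyclic V (Es k)"
      using less.IH[OF _ st(2) refl less.prems(3)] st(3) less.prems(2) by metis
    define Fs where "Fs = (\<lambda>i. case i of 0 \<Rightarrow> E | Suc j \<Rightarrow> Es j)"
    have "Fs 0 = E" unfolding Fs_def by simp
    moreover have "\<forall>i<Suc k. \<exists>a b c d. p_switch V (Fs i) a b c d \<and> Fs (Suc i) = two_switch a b c d (Fs i)"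
    proof (intro allI impI)
      fix i assume i: "i < Suc k"
      show "\<exists>a b c d. p_switch V (Fs i) a b c d \<and> Fs (Suc i) = two_switch a b c d (Fs i)"
      proof (cases i)
        case 0 then show ?thesis unfolding Fs_def using st(1) IH(1)
          by (intro exI[of _ a] exI[of _ b] exI[of _ c] exI[of _ d]) simp
      next
        case (Suc j) then have "j < k" using i by simp
        then show ?thesis unfolding Fs_def using IH(2) Suc by simp
      qed
    qed
    moreover have "unicyclic V (Fs (Suc k))" unfolding Fs_def using IH(3) by simp
    ultimately have P: "Fs 0 = E \<and> (\<forall>i<Suc k. \<exists>a b c d. p_switch V (Fs i) a b c d \<and> Fs (Suc i) = two_switch a b c d (Fs i)) \<and> unicyclic V (Fs (Suc k))"
      by (intro conjI)
    show ?thesis by (rule exI[of _ "Suc k"], rule exI[of _ Fs], rule P)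
  qed
qed

lemma init_U:
  assumes pf: "pseudoforest V E" and cy: "cycles E = kappa V E"
  shows "U V E"
proof -
  have g: "graph V E" using pf unfolding pseudoforest_def by simp
  let ?K = "components V E"
  let ?f = "\<lambda>W. cycles (induced_edges E W)"
  have finK: "finite ?K" using comp_finite[OF g] .
  have le1: "?f W \<le> 1" if "W \<in> ?K" for W
  proof -
    have "tree W (induced_edges E W) \<or> unicyclic W (induced_edges E W)" using pf that unfolding pseudoforest_def by blast
    then show ?thesis by (elim disjE) (simp_all add: tree_def unicyclic_def)
  qed
  have finE: "finite E" using graph_finite[OF g] .
  have finA: "finite {C. is_cycle_subgraph (induced_edges E W) C}" for W
  proof -
    have "{C. is_cycle_subgraph (induced_edges E W) C} \<subseteq> Pow E"
      unfolding is_cycle_subgraph_def induced_edges_def by blast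
    then show ?thesis using finE by (meson finite_Pow_iff rev_finite_subset)
  qed
  have sub: "{C. is_cycle_subgraph E C} \<subseteq> (\<Union>W\<in>?K. {C. is_cycle_subgraph (induced_edges E W) C})"
  proof
    fix C assume "C \<in> {C. is_cycle_subgraph E C}"
    then have c: "is_cycle_subgraph E C" by simp
    obtain W where "W \<in> ?K" "C \<subseteq> induced_edges E W" using cyc_in_comp[OF g c] by blast
    then show "C \<in> (\<Union>W\<in>?K. {C. is_cycle_subgraph (induced_edges E W) C})"
      using cyc_change[OF c] by blast
  qed
  have "cycles E \<le> card (\<Union>W\<in>?K. {C. is_cycle_subgraph (induced_edges E W) C})"
    unfolding cycles_def by (rule card_mono) (use finK finA sub in auto)
  also have "\<dots> \<le> (\<Sum>W\<in>?K. ?f W)"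
    unfolding cycles_def by (rule card_UN_le[OF finK])
  finally have cle: "cycles E \<le> (\<Sum>W\<in>?K. ?f W)" .
  have all1: "?f W = 1" if W: "W \<in> ?K" for W
  proof (rule ccontr)
    assume "?f W \<noteq> 1"
    then have "?f W = 0" using le1[OF W] by simp
    have "(\<Sum>W\<in>?K. ?f W) = ?f W + (\<Sum>W\<in>?K - {W}. ?f W)"
      using W finK by (simp add: sum.remove)
    also have "\<dots> \<le> 0 + (\<Sum>W\<in>?K - {W}. 1)"
      using \<open>?f W = 0\<close> le1 by (intro add_mono sum_mono) auto
    also have "\<dots> = card ?K - 1" using W finK by simp
    finally have "cycles E \<le> card ?K - 1" using cle by linarith
    moreover have "card ?K > 0" using W finK card_gt_0_iff by blast
    ultimately show False using cy unfolding kappa_def by linarith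
  qed
  show ?thesis unfolding U_def
  proof (intro conjI ballI)
    show "graph V E" using g .
    fix W assume "W \<in> ?K"
    then have "card {C. is_cycle_subgraph (induced_edges E W) C} = 1" using all1 unfolding cycles_def by simp
    then show "\<exists>!C. is_cycle_subgraph (induced_edges E W) C" by (rule card_one_iff_ex1[THEN iffD1])
  qed
qed

theorem lemma5p5:
  fixes V :: "'a set" and E :: "'a set set"
  assumes "V \<noteq> {}"
    and "pseudoforest V E"
    and "cycles E = kappa V E"
  shows "\<exists>(k::nat) (Es :: nat \<Rightarrow> 'a set set). Es 0 = E \<and>
           (\<forall>i<k. \<exists>a b c d. p_switch V (Es i) a b c d \<and> Es (Suc i) = two_switch a b c d (Es i)) \<and>
           unicyclic V (Es k)"
  using main_ind[OF init_U[OF assms(2,3)] refl assms(1)] .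


end
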